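(* Let $\alpha\in(0,1)$, $\gamma,\beta>0$, $r_0>0$, $Y=B(0,r_0)\subset\mathbb R\oplus\mathbb R^{d-1}$, and $\mathcal X(x)=\|x\|^\alpha Ax$ with $A=\gamma\,\mathrm{Id}_{\mathbb R}\oplus(-\beta\,\mathrm{Id}_{\mathbb R^{d-1}})$, with flow $\varphi_t$. There is $Q_0\in\mathbb R$ such that for every trajectory $x(t)$ of $\mathcal X$ entering $Y$ at time $0$ and leaving it at time $T_0$, every flow-invariant family $v(t)=D\varphi_t(x(0))v(0)$ with $\tan\rho(0)\le\alpha/2$, and every $t_1,t_2\in[0,T_0]$, $$\int_{t_1}^{t_2}\|x\|^\alpha\tan\rho\,dt\le Q_0,$$ where $\rho(t)$ is the angle between $v(t)$ and $\mathbb R\times\{0\}$.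
   Context: The condition $\tan\rho(0)\le\alpha/2$ expresses that $v(0)$ lies in the unstable cone $K^u$ used in this construction (the cone $\{\tan\rho\le\alpha/2\}$, which is forward invariant under the flow). *)

theory Defs
  imports "HOL-Analysis.Analysis"
begin

text \<open>Points of R (+) R^(d-1) are pairs (u, w) with u real and w :: real^'n, CARD('n) = d - 1.
  The norm on the product type is the Euclidean norm sqrt(u^2 + |w|^2).\<close>

definition VF :: "real \<Rightarrow> real \<Rightarrow> real \<Rightarrow> real \<times> (real^'n) \<Rightarrow> real \<times> (real^'n)" where
  "VF \<alpha> \<gamma> \<beta> x = (norm x powr \<alpha>) *\<^sub>R (\<gamma> * fst x, - \<beta> *\<^sub>R snd x)"

definition axis_angle :: "real \<times> (real^'n) \<Rightarrow> real" where
  "axis_angle v = arccos (\<bar>fst v\<bar> / norm v)"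

end

theory Submission
  imports Defs
begin


lemma deriv_mono_gen:
  fixes g g' :: "real \<Rightarrow> real"
  assumes d: "\<forall>t\<in>{0..T}. (g has_real_derivative g' t) (at t within {0..T})"
    and nn: "\<forall>t\<in>{0..T}. g' t \<ge> 0"
    and st: "0 \<le> s" "s \<le> t" "t \<le> T"
  shows "g s \<le> g t"
proof -
  have cont: "continuous_on {0..T} g"
    using d by (meson DERIV_continuous continuous_on_eq_continuous_within)
  show ?thesis
  proof (rule DERIV_nonneg_imp_increasing_open[OF st(2)])
    fix y assume y: "s < y" "y < t"
    then have "y \<in> {0..T}" using st by auto
    moreover have "at y within {0..T} = at y" using y st by (intro at_within_Icc_at) auto
    ultimately show "\<exists>z. DERIV g y :> z \<and> z \<ge> 0" using d nn by metis
  next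
    show "continuous_on {s..t} g" using cont st by (auto intro: continuous_on_subset)
  qed
qed

lemma gronwall_pos:
  fixes g g' :: "real \<Rightarrow> real"
  assumes d: "\<forall>t\<in>{0..T}. (g has_real_derivative g' t) (at t within {0..T})"
    and lb: "\<forall>t\<in>{0..T}. g' t \<ge> - K * g t"
    and g0: "g 0 > 0" and t: "t \<in> {0..T}"
  shows "g t > 0"
proof -
  define h where "h s = exp (K * s) * g s" for s
  have dh: "\<forall>s\<in>{0..T}. (h has_real_derivative (exp (K * s) * (g' s + K * g s))) (at s within {0..T})"
  proof
    fix s assume s: "s \<in> {0..T}"
    have "(h has_real_derivative (exp (K * s) * K * g s + exp (K * s) * g' s)) (at s within {0..T})"
      unfolding h_def using d s by (auto intro!: derivative_eq_intros)
    then show "(h has_real_derivative (exp (K * s) * (g' s + K * g s))) (at s within {0..T})"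
      by (simp add: algebra_simps)
  qed
  have "h 0 \<le> h t"
    by (rule deriv_mono_gen[OF dh]) (use lb t in auto)
  then have "0 < exp (K*t) * g t" using g0 unfolding h_def by simp
  then show ?thesis by (simp add: zero_less_mult_iff)
qed

lemma barrier:
  fixes g g' :: "real \<Rightarrow> real"
  assumes d: "\<forall>t\<in>{0..T}. (g has_real_derivative g' t) (at t within {0..T})"
    and ub: "\<forall>t\<in>{0..T}. g t \<ge> 0 \<longrightarrow> g' t \<le> K * g t"
    and g0: "g 0 \<le> 0" and t: "t \<in> {0..T}"
  shows "g t \<le> 0"
proof (rule ccontr)
  assume "\<not> g t \<le> 0"
  then have gt: "g t > 0" by simp
  define h where "h s = exp (- K * s) * g s" for s
  have cont: "continuous_on {0..T} g"
    using d by (meson DERIV_continuous continuous_on_eq_continuous_within)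
  define S where "S = {s\<in>{0..t}. g s \<le> 0}"
  have tT: "{0..t} \<subseteq> {0..T}" using t by auto
  have cS: "closed S" unfolding S_def
  proof -
    have "closed ({0..t} \<inter> g -` {..0})"
      by (rule continuous_closed_preimage) (auto intro: continuous_on_subset[OF cont tT])
    moreover have "{s\<in>{0..t}. g s \<le> 0} = {0..t} \<inter> g -` {..0}" by auto
    ultimately show "closed {s\<in>{0..t}. g s \<le> 0}" by simp
  qed
  have t0: "0 \<le> t" using t by auto
  have S0: "0 \<in> S" using g0 t0 unfolding S_def by auto
  have bS: "bdd_above S" unfolding S_def by (auto intro: bdd_aboveI[of _ t])
  define z where "z = Sup S"
  have zS: "z \<in> S" unfolding z_def using closed_contains_Sup[OF _ bS cS] S0 by blast
  then have z: "0 \<le> z" "z \<le> t" "g z \<le> 0" unfolding S_def by auto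
  have zt: "z < t" using z gt by (cases "z = t") auto
  have pos: "g y > 0" if "z < y" "y \<le> t" for y
  proof (rule ccontr)
    assume "\<not> g y > 0"
    then have "y \<in> S" using that z unfolding S_def by auto
    then have "y \<le> z" unfolding z_def using bS by (rule cSup_upper)
    then show False using that by simp
  qed
  have "(\<lambda>s. - h s) z \<le> (\<lambda>s. - h s) t"
  proof (rule DERIV_nonneg_imp_increasing_open[OF less_imp_le[OF zt]])
    fix y assume y: "z < y" "y < t"
    then have yT: "y \<in> {0..T}" using z t by auto
    have "at y within {0..T} = at y" using y z t by (intro at_within_Icc_at) auto
    then have dg: "(g has_real_derivative g' y) (at y)" using d yT by metis
    have "((\<lambda>s. - h s) has_real_derivative - (exp (- K * y) * (g' y - K * g y))) (at y)"
      unfolding h_def using dg by (auto intro!: derivative_eq_intros simp: algebra_simps)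
    moreover have "g' y \<le> K * g y" using ub yT pos[of y] y by auto
    ultimately show "\<exists>l. DERIV (\<lambda>s. - h s) y :> l \<and> l \<ge> 0"
      by (intro exI[of _ "- (exp (- K * y) * (g' y - K * g y))"]) (auto simp: mult_nonneg_nonpos)
  next
    show "continuous_on {z..t} (\<lambda>s. - h s)" unfolding h_def
      using z t by (auto intro!: continuous_intros continuous_on_subset[OF cont])
  qed
  then have "h t \<le> h z" by simp
  moreover have "h z \<le> 0" using z unfolding h_def by (simp add: mult_nonneg_nonpos)
  moreover have "h t > 0" using gt unfolding h_def by simp
  ultimately show False by simp
qed




lemma npow_deriv:
  fixes y :: "'a::real_inner"
  assumes "y \<noteq> 0"
  shows "((\<lambda>z. norm z powr \<alpha>) has_derivative (\<lambda>h. \<alpha> * norm y powr \<alpha> / (norm y)^2 * inner y h)) (at y)"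
proof -
  have n: "(norm has_derivative (\<lambda>h. inner h (sgn y))) (at y)"
    using has_derivative_norm[OF assms] by simp
  have "((\<lambda>z. norm z powr \<alpha>) has_derivative (\<lambda>h. norm y powr \<alpha> * (0 * ln (norm y) + inner h (sgn y) * \<alpha> / norm y))) (at y)"
    by (rule has_derivative_powr[OF n has_derivative_const]) (use assms in auto)
  moreover have "(\<lambda>h. norm y powr \<alpha> * (0 * ln (norm y) + inner h (sgn y) * \<alpha> / norm y)) = (\<lambda>h. \<alpha> * norm y powr \<alpha> / (norm y)^2 * inner y h)"
    using assms by (auto simp: sgn_div_norm inner_commute power2_eq_square field_simps)
  ultimately show ?thesis by simp
qed

lemma VF_deriv:
  fixes y :: "real \<times> (real^'n)"
  assumes "y \<noteq> 0"
  shows "(VF \<alpha> \<gamma> \<beta> has_derivative (\<lambda>h. (\<alpha> * norm y powr \<alpha> / (norm y)^2 * inner y h) *\<^sub>R (\<gamma> * fst y, - \<beta> *\<^sub>R snd y) + norm y powr \<alpha> *\<^sub>R (\<gamma> * fst h, - \<beta> *\<^sub>R snd h))) (at y)"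
proof -
  have l: "((\<lambda>z::real \<times> (real^'n). (\<gamma> * fst z, - \<beta> *\<^sub>R snd z)) has_derivative (\<lambda>h. (\<gamma> * fst h, - \<beta> *\<^sub>R snd h))) (at y)"
    by (auto intro!: derivative_eq_intros)
  have "((\<lambda>z. norm z powr \<alpha> *\<^sub>R (\<gamma> * fst z, - \<beta> *\<^sub>R snd z)) has_derivative (\<lambda>h. norm y powr \<alpha> *\<^sub>R (\<gamma> * fst h, - \<beta> *\<^sub>R snd h) + (\<alpha> * norm y powr \<alpha> / (norm y)^2 * inner y h) *\<^sub>R (\<gamma> * fst y, - \<beta> *\<^sub>R snd y))) (at y)"
    by (rule has_derivative_scaleR[OF npow_deriv[OF assms] l])
  then show ?thesis unfolding VF_def[abs_def] by (simp add: add.commute)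
qed



lemma hvd_fst: "(f has_vector_derivative f') F \<Longrightarrow> ((\<lambda>t. fst (f t)) has_real_derivative fst f') F"
  unfolding has_real_derivative_iff_has_vector_derivative has_vector_derivative_def
  by (drule has_derivative_fst) simp

lemma hvd_snd: "(f has_vector_derivative f') F \<Longrightarrow> ((\<lambda>t. snd (f t)) has_vector_derivative snd f') F"
  unfolding has_vector_derivative_def
  by (drule has_derivative_snd) simp

lemma hvd_inner:
  fixes f :: "real \<Rightarrow> 'a::real_inner"
  assumes "(f has_vector_derivative f') (at t within S)"
  shows "((\<lambda>s. inner (f s) (f s)) has_real_derivative 2 * inner (f t) f') (at t within S)"
proof -
  have a: "(f has_derivative (\<lambda>h. h *\<^sub>R f')) (at t within S)" using assms by (simp add: has_vector_derivative_def)
  have "((\<lambda>s. inner (f s) (f s)) has_derivative (\<lambda>h. inner (f t) (h *\<^sub>R f') + inner (h *\<^sub>R f') (f t))) (at t within S)"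
    by (rule has_derivative_inner[OF a a])
  moreover have "(\<lambda>h. inner (f t) (h *\<^sub>R f') + inner (h *\<^sub>R f') (f t)) = (\<lambda>h. (2 * inner (f t) f') * h)"
    by (auto simp: inner_commute algebra_simps)
  ultimately show ?thesis by (simp add: has_field_derivative_def)
qed

lemma tan_axis_angle:
  fixes v :: "real \<times> (real^'n)"
  assumes "fst v \<noteq> 0"
  shows "tan (axis_angle v) = norm (snd v) / \<bar>fst v\<bar>"
proof -
  have nv: "norm v = sqrt ((fst v)^2 + (norm (snd v))^2)"
    by (metis norm_Pair prod.collapse real_norm_def power2_abs)
  have pos: "norm v > 0" using assms by (auto simp: nv add_pos_nonneg)
  have le: "\<bar>fst v\<bar> \<le> norm v" unfolding nv by (metis abs_ge_self le_add_same_cancel1 real_sqrt_abs real_sqrt_le_mono zero_le_power2 power2_abs) 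
  define c where "c = \<bar>fst v\<bar> / norm v"
  have c: "0 < c" "c \<le> 1" using assms pos le unfolding c_def by auto
  have "tan (axis_angle v) = sqrt (1 - c^2) / c"
    unfolding axis_angle_def c_def[symmetric] tan_def using c by (simp add: sin_arccos cos_arccos)
  also have "1 - c^2 = (norm (snd v))^2 / (norm v)^2"
  proof -
    have ne: "(fst v)^2 + (norm (snd v))^2 \<noteq> 0" using pos nv by auto
    have "1 - c^2 = 1 - (fst v)^2 / ((fst v)^2 + (norm (snd v))^2)"
      using pos unfolding c_def by (simp add: nv power_divide)
    also have "\<dots> = (norm (snd v))^2 / ((fst v)^2 + (norm (snd v))^2)"
      using ne by (simp add: field_simps)
    finally show ?thesis using pos by (simp add: nv)
  qed
  also have "sqrt ((norm (snd v))^2 / (norm v)^2) / c = norm (snd v) / \<bar>fst v\<bar>"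
    using pos assms unfolding c_def by (simp add: real_sqrt_divide)
  finally show ?thesis .
qed



lemma cross_bound:
  fixes U A q Wn Bn NN :: real
  assumes "NN = U^2 + Wn^2" "Wn \<ge> 0" "Bn \<ge> 0" "\<bar>q\<bar> \<le> Wn * Bn"
  shows "2 * \<bar>U * A * q\<bar> \<le> \<bar>A\<bar> * Bn * NN"
proof -
  have "\<bar>U * A * q\<bar> \<le> \<bar>U\<bar> * \<bar>A\<bar> * (Wn * Bn)"
    using assms by (simp add: abs_mult mult_left_mono)
  moreover have "2 * (\<bar>U\<bar> * Wn) \<le> NN"
    using assms sum_squares_bound[of "\<bar>U\<bar>" Wn] by (simp add: power2_abs)
  ultimately have "2 * \<bar>U * A * q\<bar> \<le> (\<bar>A\<bar> * Bn) * (2 * (\<bar>U\<bar> * Wn))" by (simp add: algebra_simps)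
  also have "\<dots> \<le> (\<bar>A\<bar> * Bn) * NN" using \<open>2 * (\<bar>U\<bar> * Wn) \<le> NN\<close> assms
    by (intro mult_left_mono) auto
  finally show ?thesis by simp
qed

lemma cone_alg:
  fixes \<alpha> \<gamma> \<beta> NN U Wn Bn q A :: real
  assumes "0<\<alpha>" "\<alpha><1" "0<\<gamma>" "0<\<beta>" "NN>0" "NN = U^2 + Wn^2" "Wn \<ge> 0" "Bn \<ge> 0"
    "\<bar>q\<bar> \<le> Wn * Bn" "(\<alpha>^2/4) * A^2 \<le> Bn^2"
  shows "- \<beta> * (Bn^2 + \<alpha> * ((U*A+q)/NN) * q) - (\<alpha>^2/4) * \<gamma> * (A * (A + \<alpha> * U * ((U*A+q)/NN)))
     \<le> (\<alpha>^2/4) * \<gamma> * (Bn^2 - (\<alpha>^2/4) * A^2)"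
proof -
  define k where "k = \<alpha>^2/4"
  have a2: "\<alpha>^2 \<le> 1" by (rule power_le_one) (use assms in auto)
  have k: "0 < k" "k \<le> 1" using assms(1) a2 unfolding k_def by auto
  have cb: "2 * \<bar>U * A * q\<bar> \<le> \<bar>A\<bar> * Bn * NN" by (rule cross_bound) (use assms in auto)
  have eq: "- \<beta> * (Bn^2 + \<alpha> * ((U*A+q)/NN) * q) - k * \<gamma> * (A * (A + \<alpha> * U * ((U*A+q)/NN)))
     = - \<beta> * Bn^2 - k * \<gamma> * A^2 - \<alpha> * (\<beta> * q^2 + k * \<gamma> * U^2 * A^2) / NN + \<alpha> * (\<beta> + k * \<gamma>) * (- (U * A * q) / NN)"
    using \<open>NN > 0\<close> by (simp add: field_simps power2_eq_square)
  have t1: "\<alpha> * (\<beta> * q^2 + k * \<gamma> * U^2 * A^2) / NN \<ge> 0"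
    using assms(1,3,4,5) k by (intro divide_nonneg_pos mult_nonneg_nonneg add_nonneg_nonneg) auto
  have t2: "\<alpha> * (\<beta> + k * \<gamma>) * (- (U * A * q) / NN) \<le> \<alpha> * (\<beta> + k * \<gamma>) * (\<bar>A\<bar> * Bn / 2)"
  proof -
    have "- (U * A * q) \<le> \<bar>A\<bar> * Bn * NN / 2" using cb by linarith
    then have "- (U * A * q) / NN \<le> \<bar>A\<bar> * Bn / 2" using assms(5) by (simp add: divide_simps)
    moreover have "\<alpha> * (\<beta> + k * \<gamma>) \<ge> 0" using assms(1,3,4) k by auto
    ultimately have "\<alpha> * (\<beta> + k * \<gamma>) * (- (U * A * q) / NN) \<le> \<alpha> * (\<beta> + k * \<gamma>) * (\<bar>A\<bar> * Bn / 2)"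
      by (rule mult_left_mono)
    then show ?thesis .
  qed
  have t3: "\<alpha> * \<bar>A\<bar> * Bn \<le> 2 * Bn^2"
  proof -
    have "(\<alpha> * \<bar>A\<bar>)^2 \<le> (2 * Bn)^2" using assms(10) by (simp add: power_mult_distrib)
    then have "\<alpha> * \<bar>A\<bar> \<le> 2 * Bn" using assms(8) power2_le_imp_le[of "\<alpha> * \<bar>A\<bar>" "2 * Bn"] by auto
    then have "\<alpha> * \<bar>A\<bar> * Bn \<le> 2 * Bn * Bn" using assms(8) by (intro mult_right_mono) auto
    then show ?thesis by (simp add: power2_eq_square)
  qed
  have t4: "\<alpha> * (\<beta> + k * \<gamma>) * (\<bar>A\<bar> * Bn / 2) \<le> (\<beta> + k * \<gamma>) * Bn^2"
  proof -
    have "(\<beta> + k * \<gamma>) * (\<alpha> * \<bar>A\<bar> * Bn) \<le> (\<beta> + k * \<gamma>) * (2 * Bn^2)"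
      using t3 assms(3,4) k by (intro mult_left_mono) auto
    moreover have "\<alpha> * (\<beta> + k * \<gamma>) * (\<bar>A\<bar> * Bn / 2) = (\<beta> + k * \<gamma>) * (\<alpha> * \<bar>A\<bar> * Bn) / 2" by simp
    moreover have "(\<beta> + k * \<gamma>) * (2 * Bn^2) = 2 * ((\<beta> + k * \<gamma>) * Bn^2)" by simp
    ultimately show ?thesis by linarith
  qed
  have t5: "k * \<gamma> * A^2 \<ge> k * \<gamma> * (k * A^2)"
  proof -
    have "k * A^2 \<le> 1 * A^2" using k by (intro mult_right_mono) auto
    then have "k * \<gamma> * (k * A^2) \<le> k * \<gamma> * (1 * A^2)" using k assms(3) by (intro mult_left_mono) auto
    then show ?thesis by simp
  qed
  have e1: "(\<beta> + k * \<gamma>) * Bn^2 = \<beta> * Bn^2 + k * \<gamma> * Bn^2" by (simp add: algebra_simps)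
  have e2: "k * \<gamma> * (Bn^2 - k * A^2) = k * \<gamma> * Bn^2 - k * \<gamma> * (k * A^2)" by (simp add: algebra_simps)
  show ?thesis unfolding k_def[symmetric] eq e2 using t1 t2 t4 t5 e1 by linarith
qed

lemma asq_alg:
  fixes \<alpha> NN U Wn Bn q A :: real
  assumes "0<\<alpha>" "\<alpha><1" "NN>0" "NN = U^2 + Wn^2" "Wn \<ge> 0" "Bn \<ge> 0"
    "\<bar>q\<bar> \<le> Wn * Bn" "Bn \<le> \<bar>A\<bar>"
  shows "- (A^2) \<le> A * (A + \<alpha> * U * ((U * A + q) / NN))"
proof -
  have cb: "2 * \<bar>U * A * q\<bar> \<le> \<bar>A\<bar> * Bn * NN" by (rule cross_bound) (use assms in auto)
  have "\<bar>A\<bar> * Bn \<le> \<bar>A\<bar> * \<bar>A\<bar>" using assms by (intro mult_left_mono) auto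
  then have "\<bar>A\<bar> * Bn * NN \<le> \<bar>A\<bar> * \<bar>A\<bar> * NN" using assms by (intro mult_right_mono) auto
  then have "\<bar>U * A * q\<bar> \<le> A^2 * NN" using cb by (simp add: power2_eq_square abs_mult_self)
  moreover have "U^2 * A^2 \<le> A^2 * NN" using assms(4) by (simp add: algebra_simps)
  ultimately have b1: "\<bar>U * A * (U * A + q)\<bar> \<le> 2 * A^2 * NN"
  proof -
    assume h1: "\<bar>U * A * q\<bar> \<le> A^2 * NN" and h2: "U^2 * A^2 \<le> A^2 * NN"
    have "U * A * (U * A + q) = U^2 * A^2 + U * A * q" by (simp add: algebra_simps power2_eq_square)
    then have "\<bar>U * A * (U * A + q)\<bar> \<le> \<bar>U^2 * A^2\<bar> + \<bar>U * A * q\<bar>" by (metis abs_triangle_ineq)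
    also have "\<bar>U^2 * A^2\<bar> = U^2 * A^2" by simp
    finally show ?thesis using h1 h2 by linarith
  qed
  have b2: "\<bar>U * A * ((U * A + q) / NN)\<bar> \<le> 2 * A^2"
  proof -
    have "\<bar>U * A * ((U * A + q) / NN)\<bar> = \<bar>U * A * (U * A + q)\<bar> / NN"
      using assms by (simp add: abs_divide abs_mult)
    also have "\<dots> \<le> 2 * A^2 * NN / NN" using b1 assms by (intro divide_right_mono) auto
    also have "\<dots> = 2 * A^2" using \<open>NN > 0\<close> by simp
    finally show ?thesis .
  qed
  have "\<bar>\<alpha> * (U * A * ((U * A + q) / NN))\<bar> \<le> 1 * (2 * A^2)"
    unfolding abs_mult[of \<alpha>] using assms b2 by (intro mult_mono) auto
  then have "\<bar>\<alpha> * (U * A * ((U * A + q) / NN))\<bar> \<le> 2 * A^2" by (simp only: mult_1)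
  then have "- (2 * A^2) \<le> \<alpha> * (U * A * ((U * A + q) / NN))"
    by (metis abs_le_D2 minus_le_iff)
  moreover have "A * (A + \<alpha> * U * ((U * A + q) / NN)) = A^2 + \<alpha> * (U * A * ((U * A + q) / NN))"
    by (simp add: algebra_simps power2_eq_square)
  ultimately show ?thesis by linarith
qed




lemma eta_alg:
  fixes \<alpha> \<gamma> \<beta> nn NN U Wn Bn q A \<epsilon> :: real
  assumes ab: "0<\<alpha>" "\<alpha><1" "0<\<gamma>" "0<\<beta>" and nn: "nn \<ge> 0" and NN: "NN>0" "NN = U^2 + Wn^2"
    and W: "Wn \<ge> 0" "Bn \<ge> 0" "\<bar>q\<bar> \<le> Wn * Bn" and A: "A \<noteq> 0" and cone: "Bn^2 \<le> (\<alpha>^2/4) * A^2"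
    and e: "\<epsilon> > 0"
  defines "p \<equiv> (U * A + q) / NN"
  defines "\<eta> \<equiv> sqrt (Bn^2 / A^2 + \<epsilon>^2)"
  shows "((- (2 * \<beta> * nn * (Bn^2 + \<alpha> * p * q))) * A^2 - Bn^2 * (2 * A * (\<gamma> * nn * (A + \<alpha> * U * p)))) / (A^2)^2 / (2 * \<eta>)
     \<le> nn * (- (\<beta> + \<gamma>) * \<eta> + (\<beta> + \<gamma>) * \<epsilon> + \<alpha> * (\<beta> + \<gamma> * (\<alpha>^2/4)) * (\<bar>U\<bar> * Wn / NN))"
proof -
  define k where "k = \<alpha>^2/4"
  define T where "T = Bn^2 / A^2"
  define \<tau> where "\<tau> = Bn / \<bar>A\<bar>"
  define r where "r = q / A"
  define m where "m = \<bar>U\<bar> * Wn / NN"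
  have A2: "A^2 > 0" using A by simp
  have T: "T = \<tau>^2" unfolding T_def \<tau>_def by (simp add: power_divide)
  have tau0: "\<tau> \<ge> 0" unfolding \<tau>_def using W by simp
  have T0: "T \<ge> 0" unfolding T_def by simp
  have Tk: "T \<le> k" unfolding T_def k_def using cone A2 by (simp add: divide_le_eq)
  have m0: "m \<ge> 0" unfolding m_def using W NN by simp
  have r: "\<bar>r\<bar> \<le> Wn * \<tau>" unfolding r_def \<tau>_def using W A by (simp add: abs_divide divide_right_mono)
  have eta2: "\<eta>^2 = T + \<epsilon>^2" unfolding \<eta>_def T_def by simp
  have eta_e: "\<epsilon> \<le> \<eta>" unfolding \<eta>_def using e by (metis T0 T_def le_add_same_cancel2 real_sqrt_le_mono real_sqrt_unique less_imp_le)
  have eta_pos: "\<eta> > 0" using eta_e e by simp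
  have tau_eta: "\<tau> \<le> \<eta>" unfolding \<eta>_def using tau0 T T_def
    by (metis le_add_same_cancel1 real_sqrt_le_mono real_sqrt_unique zero_le_power2)
  define X where "X = - (\<beta> + \<gamma>) * T - \<alpha> * ((U + r) * (\<beta> * r + \<gamma> * U * T)) / NN"
  have E: "((- (2 * \<beta> * nn * (Bn^2 + \<alpha> * p * q))) * A^2 - Bn^2 * (2 * A * (\<gamma> * nn * (A + \<alpha> * U * p)))) / (A^2)^2
      = 2 * nn * X"
    unfolding X_def p_def r_def T_def using A NN(1) by (simp add: field_simps power2_eq_square)
  have s2: "(U + r) * (\<beta> * r + \<gamma> * U * T) \<ge> - (\<bar>U\<bar> * \<bar>r\<bar> * (\<beta> + \<gamma> * T))"
  proof -
    have "(U + r) * (\<beta> * r + \<gamma> * U * T) = (U * r) * (\<beta> + \<gamma> * T) + (\<beta> * r^2 + \<gamma> * U^2 * T)"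
      by (simp add: algebra_simps power2_eq_square)
    moreover have "\<beta> * r^2 + \<gamma> * U^2 * T \<ge> 0" using ab T0 by simp
    moreover have "(U * r) * (\<beta> + \<gamma> * T) \<ge> - (\<bar>U\<bar> * \<bar>r\<bar> * (\<beta> + \<gamma> * T))"
    proof -
      have "- (\<bar>U\<bar> * \<bar>r\<bar>) \<le> U * r" by (metis abs_ge_minus_self abs_mult minus_le_iff)
      moreover have "\<beta> + \<gamma> * T \<ge> 0" using ab T0 by simp
      ultimately have "- (\<bar>U\<bar> * \<bar>r\<bar>) * (\<beta> + \<gamma> * T) \<le> U * r * (\<beta> + \<gamma> * T)" by (rule mult_right_mono)
      then show ?thesis by simp
    qed
    ultimately show ?thesis by linarith
  qed
  have s3: "\<bar>U\<bar> * \<bar>r\<bar> * (\<beta> + \<gamma> * T) \<le> \<bar>U\<bar> * Wn * \<tau> * (\<beta> + \<gamma> * T)"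
  proof -
    have h: "\<bar>U\<bar> * \<bar>r\<bar> \<le> \<bar>U\<bar> * (Wn * \<tau>)" using r by (rule mult_left_mono) auto
    have "0 \<le> \<beta> + \<gamma> * T" using ab T0 by simp
    from mult_right_mono[OF h this] show ?thesis by (simp add: mult.assoc)
  qed
  have Xle: "X \<le> - (\<beta> + \<gamma>) * T + \<alpha> * m * (\<tau> * (\<beta> + \<gamma> * T))"
  proof -
    have "- (\<alpha> * ((U + r) * (\<beta> * r + \<gamma> * U * T))) \<le> \<alpha> * (\<bar>U\<bar> * Wn * \<tau> * (\<beta> + \<gamma> * T))"
    proof -
      have "- ((U + r) * (\<beta> * r + \<gamma> * U * T)) \<le> \<bar>U\<bar> * Wn * \<tau> * (\<beta> + \<gamma> * T)" using s2 s3 by linarith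
      from mult_left_mono[OF this, of \<alpha>] ab show ?thesis by simp
    qed
    then have "- (\<alpha> * ((U + r) * (\<beta> * r + \<gamma> * U * T))) / NN \<le> \<alpha> * (\<bar>U\<bar> * Wn * \<tau> * (\<beta> + \<gamma> * T)) / NN"
      using NN by (intro divide_right_mono) auto
    moreover have "\<alpha> * (\<bar>U\<bar> * Wn * \<tau> * (\<beta> + \<gamma> * T)) / NN = \<alpha> * m * (\<tau> * (\<beta> + \<gamma> * T))"
      unfolding m_def by simp
    ultimately show ?thesis unfolding X_def by simp
  qed
  have q1: "T / \<eta> \<ge> \<eta> - \<epsilon>"
  proof -
    have "T / \<eta> = \<eta> - \<epsilon>^2 / \<eta>" using eta2 eta_pos by (simp add: field_simps power2_eq_square)
    moreover have "\<epsilon>^2 / \<eta> \<le> \<epsilon>" using eta_e eta_pos e by (simp add: divide_le_eq power2_eq_square mult_left_mono)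
    ultimately show ?thesis by simp
  qed
  have q2: "\<tau> * (\<beta> + \<gamma> * T) / \<eta> \<le> \<beta> + \<gamma> * k"
  proof -
    have "\<tau> / \<eta> \<le> 1" using tau_eta eta_pos by simp
    moreover have "\<beta> + \<gamma> * T \<le> \<beta> + \<gamma> * k" using Tk ab by simp
    moreover have "\<beta> + \<gamma> * T \<ge> 0" using ab T0 by simp
    ultimately have "(\<tau> / \<eta>) * (\<beta> + \<gamma> * T) \<le> 1 * (\<beta> + \<gamma> * k)"
      using tau0 eta_pos by (intro mult_mono) auto
    then show ?thesis by simp
  qed
  have "X / \<eta> \<le> (- (\<beta> + \<gamma>) * T + \<alpha> * m * (\<tau> * (\<beta> + \<gamma> * T))) / \<eta>"
    using Xle eta_pos by (intro divide_right_mono) auto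
  also have "\<dots> = - (\<beta> + \<gamma>) * (T / \<eta>) + \<alpha> * m * (\<tau> * (\<beta> + \<gamma> * T) / \<eta>)"
    by (simp add: add_divide_distrib)
  also have "\<dots> \<le> - (\<beta> + \<gamma>) * (\<eta> - \<epsilon>) + \<alpha> * m * (\<beta> + \<gamma> * k)"
  proof -
    have "(\<beta> + \<gamma>) * (\<eta> - \<epsilon>) \<le> (\<beta> + \<gamma>) * (T / \<eta>)" using q1 ab by (intro mult_left_mono) auto
    then have "- (\<beta> + \<gamma>) * (T / \<eta>) \<le> - (\<beta> + \<gamma>) * (\<eta> - \<epsilon>)" by linarith
    moreover have "\<alpha> * m * (\<tau> * (\<beta> + \<gamma> * T) / \<eta>) \<le> \<alpha> * m * (\<beta> + \<gamma> * k)"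
      using q2 ab m0 by (intro mult_left_mono) auto
    ultimately show ?thesis by linarith
  qed
  finally have Xe: "X / \<eta> \<le> - (\<beta> + \<gamma>) * (\<eta> - \<epsilon>) + \<alpha> * m * (\<beta> + \<gamma> * k)" .
  have "2 * nn * X / (2 * \<eta>) = nn * (X / \<eta>)" by simp
  also have "\<dots> \<le> nn * (- (\<beta> + \<gamma>) * (\<eta> - \<epsilon>) + \<alpha> * m * (\<beta> + \<gamma> * k))"
    using Xe nn by (intro mult_left_mono) auto
  also have "\<dots> = nn * (- (\<beta> + \<gamma>) * \<eta> + (\<beta> + \<gamma>) * \<epsilon> + \<alpha> * (\<beta> + \<gamma> * (\<alpha>^2/4)) * (\<bar>U\<bar> * Wn / NN))"
    unfolding m_def k_def by (simp add: algebra_simps)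
  finally show ?thesis unfolding E .
qed

lemma theta_alg:
  fixes P Q S \<beta> \<gamma> nn :: real
  assumes "P > 0" "Q > 0" "S = sqrt (P^2 + Q^2)" "\<beta> > 0" "\<gamma> > 0" "nn \<ge> 0"
  shows "((\<gamma> * nn * P + \<beta> * nn * Q) * S - (P - Q) * (nn * (\<gamma> * P^2 - \<beta> * Q^2) / S)) / S^2
    \<ge> (\<beta> + \<gamma>) * nn * (P * Q / S^2)"
proof -
  have S: "S > 0" "S^2 = P^2 + Q^2" using assms by (auto simp: add_pos_pos)
  have SPQ: "S \<le> P + Q" unfolding assms(3) using assms
    by (intro real_le_lsqrt) (auto simp: power2_eq_square algebra_simps)
  have eq: "((\<gamma> * nn * P + \<beta> * nn * Q) * S - (P - Q) * (nn * (\<gamma> * P^2 - \<beta> * Q^2) / S)) / S^2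
      = (\<beta> + \<gamma>) * nn * (P * Q * (P + Q)) / S^3"
  proof -
    have "((\<gamma> * nn * P + \<beta> * nn * Q) * S - (P - Q) * (nn * (\<gamma> * P^2 - \<beta> * Q^2) / S)) / S^2
      = ((\<gamma> * nn * P + \<beta> * nn * Q) * S^2 - (P - Q) * (nn * (\<gamma> * P^2 - \<beta> * Q^2))) / S^3"
      using S(1) by (simp add: field_simps power2_eq_square power3_eq_cube)
    also have "(\<gamma> * nn * P + \<beta> * nn * Q) * S^2 - (P - Q) * (nn * (\<gamma> * P^2 - \<beta> * Q^2)) = (\<beta> + \<gamma>) * nn * (P * Q * (P + Q))"
      unfolding S(2) by (simp add: algebra_simps power2_eq_square)
    finally show ?thesis .
  qed
  have "(\<beta> + \<gamma>) * nn * (P * Q / S^2) = (\<beta> + \<gamma>) * nn * (P * Q * S) / S^3"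
    using S by (simp add: power2_eq_square power3_eq_cube)
  also have "\<dots> \<le> (\<beta> + \<gamma>) * nn * (P * Q * (P + Q)) / S^3"
    using S SPQ assms by (intro divide_right_mono mult_left_mono) auto
  finally show ?thesis unfolding eq .
qed




lemma sqrt_chain:
  assumes "(f has_real_derivative D) (at t within S)" "f t > 0"
  shows "((\<lambda>s. sqrt (f s)) has_real_derivative D / (2 * sqrt (f t))) (at t within S)"
proof -
  have "((\<lambda>s. sqrt (f s)) has_real_derivative inverse (sqrt (f t)) / 2 * D) (at t within S)"
    by (rule DERIV_chain2[OF DERIV_real_sqrt[OF assms(2)] assms(1)])
  then show ?thesis by (rule DERIV_cong) (simp add: field_simps)
qed

definition Qc :: "real \<Rightarrow> real \<Rightarrow> real \<Rightarrow> real" where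
  "Qc \<alpha> \<gamma> \<beta> = (sqrt (\<alpha>^2/4 + 1) + 2 * (\<alpha> * (\<beta> + \<gamma> * (\<alpha>^2/4)) / (\<beta> + \<gamma>)) + 1) / (\<beta> + \<gamma>)"

lemma main:
  fixes x v :: "real \<Rightarrow> real \<times> (real^'n)" and \<alpha> \<gamma> \<beta> r0 T0 t1 t2 :: real
  assumes ha: "0 < \<alpha>" "\<alpha> < 1" "0 < \<gamma>" "0 < \<beta>" "0 < r0" and T0: "0 < T0"
  and dx: "\<forall>t\<in>{0..T0}. (x has_vector_derivative VF \<alpha> \<gamma> \<beta> (x t)) (at t within {0..T0})"
  and x0: "norm (x 0) = r0" and xT: "norm (x T0) = r0" and xin: "\<forall>t\<in>{0<..<T0}. norm (x t) < r0"
  and dv: "\<forall>t\<in>{0..T0}. \<exists>L. (VF \<alpha> \<gamma> \<beta> has_derivative L) (at (x t)) \<and> (v has_vector_derivative L (v t)) (at t within {0..T0})"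
  and v0: "fst (v 0) \<noteq> 0" and cone0: "tan (axis_angle (v 0)) \<le> \<alpha>/2"
  and t1: "t1 \<in> {0..T0}" and t2: "t2 \<in> {0..T0}"
  shows "(\<lambda>t. norm (x t) powr \<alpha> * tan (axis_angle (v t))) integrable_on {t1..t2} \<and>
         integral {t1..t2} (\<lambda>t. norm (x t) powr \<alpha> * tan (axis_angle (v t))) \<le> Qc \<alpha> \<gamma> \<beta>"
proof -
  define I where "I = {0..T0}"
  define u where "u = (\<lambda>t. fst (x t))"
  define w where "w = (\<lambda>t. snd (x t))"
  define a where "a = (\<lambda>t. fst (v t))"
  define b where "b = (\<lambda>t. snd (v t))"
  define n where "n = (\<lambda>t. norm (x t) powr \<alpha>)"
  define R where "R = r0 powr \<alpha>"
  define W2 where "W2 = (\<lambda>t. inner (w t) (w t))"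
  define N where "N = (\<lambda>t. (u t)^2 + W2 t)"
  have I0: "0 \<in> I" "T0 \<in> I" unfolding I_def using T0 by auto
  have xp: "x t = (u t, w t)" for t unfolding u_def w_def by simp
  have vp: "v t = (a t, b t)" for t unfolding a_def b_def by simp
  have W2n: "W2 t = (norm (w t))^2" for t unfolding W2_def by (simp add: power2_norm_eq_inner)
  have normx2: "(norm (x t))^2 = N t" for t
    unfolding N_def W2n xp by (simp add: norm_Pair)
  have N0: "N t \<ge> 0" for t unfolding N_def W2_def by simp
  have normx: "norm (x t) = sqrt (N t)" for t using normx2[of t] by (metis norm_ge_zero real_sqrt_unique)
  have xle: "\<forall>t\<in>I. norm (x t) \<le> r0"
  proof
    fix t assume "t \<in> I"
    then have "t = 0 \<or> t = T0 \<or> t \<in> {0<..<T0}" unfolding I_def by auto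
    then show "norm (x t) \<le> r0" using x0 xT xin by (auto simp: less_imp_le)
  qed
  have n0: "n t \<ge> 0" for t unfolding n_def by simp
  have R0: "R > 0" unfolding R_def using ha by simp
  have nle: "\<forall>t\<in>I. n t \<le> R" unfolding n_def R_def using xle ha by (auto intro: powr_mono2)
  have VFx: "VF \<alpha> \<gamma> \<beta> (x t) = (\<gamma> * n t * u t, (- (\<beta> * n t)) *\<^sub>R w t)" for t
    unfolding VF_def n_def u_def w_def by (simp add: algebra_simps)
  have du: "\<forall>t\<in>I. (u has_real_derivative \<gamma> * n t * u t) (at t within I)"
    using hvd_fst[OF dx[rule_format]] VFx unfolding I_def u_def by simp
  have dw: "\<forall>t\<in>I. (w has_vector_derivative (- (\<beta> * n t)) *\<^sub>R w t) (at t within I)"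
    using hvd_snd[OF dx[rule_format]] VFx unfolding I_def w_def by simp
  have dU2: "\<forall>t\<in>I. ((\<lambda>s. (u s)^2) has_real_derivative 2 * \<gamma> * n t * (u t)^2) (at t within I)"
  proof
    fix t assume t: "t \<in> I"
    show "((\<lambda>s. (u s)^2) has_real_derivative 2 * \<gamma> * n t * (u t)^2) (at t within I)"
      using DERIV_power[OF du[rule_format, OF t], of 2] by (rule DERIV_cong) (simp add: power2_eq_square)
  qed
  have dW2: "\<forall>t\<in>I. (W2 has_real_derivative - 2 * \<beta> * n t * W2 t) (at t within I)"
  proof
    fix t assume t: "t \<in> I"
    show "(W2 has_real_derivative - 2 * \<beta> * n t * W2 t) (at t within I)"
      unfolding W2_def using hvd_inner[OF dw[rule_format, OF t]]
      by (rule DERIV_cong) simp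
  qed
  have u0: "u 0 \<noteq> 0"
  proof
    assume u00: "u 0 = 0"
    have "(u t)^2 \<le> 0" if t: "t \<in> I" for t
    proof (rule barrier[where g = "\<lambda>s. (u s)^2" and g' = "\<lambda>t. 2 * \<gamma> * n t * (u t)^2" and K = "2 * \<gamma> * R" and T = T0])
      show "\<forall>t\<in>{0..T0}. ((\<lambda>s. (u s)^2) has_real_derivative 2 * \<gamma> * n t * (u t)^2) (at t within {0..T0})"
        using dU2 unfolding I_def .
      show "\<forall>t\<in>{0..T0}. 0 \<le> (u t)^2 \<longrightarrow> 2 * \<gamma> * n t * (u t)^2 \<le> 2 * \<gamma> * R * (u t)^2"
      proof (intro ballI impI)
        fix s assume s: "s \<in> {0..T0}" "0 \<le> (u s)^2"
        have "n s \<le> R" using nle s unfolding I_def by auto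
        then have "2 * \<gamma> * n s \<le> 2 * \<gamma> * R" using ha by simp
        then show "2 * \<gamma> * n s * (u s)^2 \<le> 2 * \<gamma> * R * (u s)^2" using s(2) by (rule mult_right_mono)
      qed
      show "(u 0)^2 \<le> 0" using u00 by simp
      show "t \<in> {0..T0}" using t unfolding I_def .
    qed
    then have uz: "\<forall>t\<in>I. u t = 0" by simp
    have "(\<lambda>s. - W2 s) (T0/2) \<le> (\<lambda>s. - W2 s) T0"
    proof (rule deriv_mono_gen[where g = "\<lambda>s. - W2 s" and g' = "\<lambda>t. 2 * \<beta> * n t * W2 t" and T = T0])
      show "\<forall>t\<in>{0..T0}. ((\<lambda>s. - W2 s) has_real_derivative 2 * \<beta> * n t * W2 t) (at t within {0..T0})"
      proof
        fix t assume t: "t \<in> {0..T0}"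
        show "((\<lambda>s. - W2 s) has_real_derivative 2 * \<beta> * n t * W2 t) (at t within {0..T0})"
          using DERIV_minus[OF dW2[rule_format, of t]] t unfolding I_def by simp
      qed
      show "\<forall>t\<in>{0..T0}. 0 \<le> 2 * \<beta> * n t * W2 t" using ha n0 unfolding W2_def by simp
    qed (use T0 in auto)
    moreover have "W2 T0 = r0^2" using normx2[of T0] xT uz I0 unfolding N_def by simp
    moreover have "W2 (T0/2) < r0^2"
    proof -
      have "norm (x (T0/2)) < r0" using xin T0 by auto
      then have "(norm (x (T0/2)))^2 < r0^2" by (simp add: power_strict_mono)
      then show ?thesis using normx2[of "T0/2"] uz T0 unfolding N_def I_def by simp
    qed
    ultimately show False by simp
  qed
  have uu: "\<forall>t\<in>I. (u t)^2 \<ge> (u 0)^2"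
  proof
    fix t assume t: "t \<in> I"
    show "(u t)^2 \<ge> (u 0)^2"
    proof (rule deriv_mono_gen[where g = "\<lambda>s. (u s)^2" and g' = "\<lambda>t. 2 * \<gamma> * n t * (u t)^2" and T = T0])
      show "\<forall>t\<in>{0..T0}. ((\<lambda>s. (u s)^2) has_real_derivative 2 * \<gamma> * n t * (u t)^2) (at t within {0..T0})"
        using dU2 unfolding I_def .
      show "\<forall>t\<in>{0..T0}. 0 \<le> 2 * \<gamma> * n t * (u t)^2" using ha n0 by simp
    qed (use t in \<open>simp_all add: I_def\<close>)
  qed
  have unz: "\<forall>t\<in>I. u t \<noteq> 0"
  proof
    fix t assume "t \<in> I"
    then have "(u t)^2 \<ge> (u 0)^2" using uu by blast
    moreover have "(u 0)^2 > 0" using u0 by simp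
    ultimately show "u t \<noteq> 0" by auto
  qed
  have Npos: "\<forall>t\<in>I. N t > 0"
  proof
    fix t assume "t \<in> I"
    then have "(u t)^2 > 0" using unz by simp
    then show "N t > 0" unfolding N_def W2_def by (simp add: add_pos_nonneg)
  qed
  have xnz: "\<forall>t\<in>I. x t \<noteq> 0" using unz unfolding u_def by auto
  define p where "p = (\<lambda>t. (u t * a t + inner (w t) (b t)) / N t)"
  have dvx: "\<forall>t\<in>I. (v has_vector_derivative (\<gamma> * n t * (a t + \<alpha> * u t * p t), (- (\<beta> * n t)) *\<^sub>R (b t + (\<alpha> * p t) *\<^sub>R w t))) (at t within I)"
  proof
    fix t assume t: "t \<in> I"
    obtain L where L: "(VF \<alpha> \<gamma> \<beta> has_derivative L) (at (x t))" "(v has_vector_derivative L (v t)) (at t within I)"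
      using dv t unfolding I_def by blast
    have "L = (\<lambda>h. (\<alpha> * norm (x t) powr \<alpha> / (norm (x t))^2 * inner (x t) h) *\<^sub>R (\<gamma> * fst (x t), - \<beta> *\<^sub>R snd (x t)) + norm (x t) powr \<alpha> *\<^sub>R (\<gamma> * fst h, - \<beta> *\<^sub>R snd h))"
      using has_derivative_unique[OF L(1) VF_deriv[OF xnz[rule_format, OF t]]] .
    then have "L (v t) = (\<alpha> * n t / N t * (u t * a t + inner (w t) (b t))) *\<^sub>R (\<gamma> * u t, - \<beta> *\<^sub>R w t) + n t *\<^sub>R (\<gamma> * a t, - \<beta> *\<^sub>R b t)"
      unfolding n_def normx2 by (simp add: xp vp)
    also have "\<alpha> * n t / N t * (u t * a t + inner (w t) (b t)) = \<alpha> * n t * p t"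
      unfolding p_def by simp
    also have "(\<alpha> * n t * p t) *\<^sub>R (\<gamma> * u t, - \<beta> *\<^sub>R w t) + n t *\<^sub>R (\<gamma> * a t, - \<beta> *\<^sub>R b t)
        = (\<gamma> * n t * (a t + \<alpha> * u t * p t), (- (\<beta> * n t)) *\<^sub>R (b t + (\<alpha> * p t) *\<^sub>R w t))"
      by (simp add: algebra_simps)
    finally show "(v has_vector_derivative (\<gamma> * n t * (a t + \<alpha> * u t * p t), (- (\<beta> * n t)) *\<^sub>R (b t + (\<alpha> * p t) *\<^sub>R w t))) (at t within I)"
      using L(2) by simp
  qed
  have da: "\<forall>t\<in>I. (a has_real_derivative \<gamma> * n t * (a t + \<alpha> * u t * p t)) (at t within I)"
    using hvd_fst[OF dvx[rule_format]] unfolding a_def by simp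
  have db: "\<forall>t\<in>I. (b has_vector_derivative (- (\<beta> * n t)) *\<^sub>R (b t + (\<alpha> * p t) *\<^sub>R w t)) (at t within I)"
    using hvd_snd[OF dvx[rule_format]] unfolding b_def by simp
  define B2 where "B2 = (\<lambda>t. inner (b t) (b t))"
  define q where "q = (\<lambda>t. inner (w t) (b t))"
  have dB2: "\<forall>t\<in>I. (B2 has_real_derivative - 2 * \<beta> * n t * (B2 t + \<alpha> * p t * q t)) (at t within I)"
  proof
    fix t assume t: "t \<in> I"
    show "(B2 has_real_derivative - 2 * \<beta> * n t * (B2 t + \<alpha> * p t * q t)) (at t within I)"
      unfolding B2_def using hvd_inner[OF db[rule_format, OF t]]
      by (rule DERIV_cong) (simp add: q_def inner_add_right inner_commute algebra_simps)
  qed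
  define k where "k = \<alpha>^2/4"
  have a21: "\<alpha>^2 \<le> 1" by (rule power_le_one) (use ha in auto)
  have k01: "0 < k" "k \<le> 1" unfolding k_def using ha(1) a21 by auto
  have CS: "\<bar>q t\<bar> \<le> norm (w t) * norm (b t)" for t unfolding q_def by (rule Cauchy_Schwarz_ineq2)
  have B2n: "B2 t = (norm (b t))^2" for t unfolding B2_def by (simp add: power2_norm_eq_inner)
  have Nn: "N t = (u t)^2 + (norm (w t))^2" for t unfolding N_def W2n ..
  have pq: "p t = (u t * a t + q t) / N t" for t unfolding p_def q_def ..
  have cone: "\<forall>t\<in>I. B2 t \<le> k * (a t)^2"
  proof
    fix t assume t: "t \<in> I"
    have "(\<lambda>s. B2 s - k * (a s)^2) t \<le> 0"
    proof (rule barrier[where g = "\<lambda>s. B2 s - k * (a s)^2" and g' = "\<lambda>t. - 2 * \<beta> * n t * (B2 t + \<alpha> * p t * q t) - k * (2 * a t * (\<gamma> * n t * (a t + \<alpha> * u t * p t)))" and K = "2 * k * \<gamma> * R" and T = T0])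
      show "\<forall>t\<in>{0..T0}. ((\<lambda>s. B2 s - k * (a s)^2) has_real_derivative - 2 * \<beta> * n t * (B2 t + \<alpha> * p t * q t) - k * (2 * a t * (\<gamma> * n t * (a t + \<alpha> * u t * p t)))) (at t within {0..T0})"
      proof
        fix s assume s: "s \<in> {0..T0}"
        have sI: "s \<in> I" using s unfolding I_def .
        have d1: "((\<lambda>s. (a s)^2) has_real_derivative 2 * a s * (\<gamma> * n s * (a s + \<alpha> * u s * p s))) (at s within I)"
          using DERIV_power[OF da[rule_format, OF sI], of 2] by (rule DERIV_cong) simp
        show "((\<lambda>s. B2 s - k * (a s)^2) has_real_derivative - 2 * \<beta> * n s * (B2 s + \<alpha> * p s * q s) - k * (2 * a s * (\<gamma> * n s * (a s + \<alpha> * u s * p s)))) (at s within {0..T0})"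
          using DERIV_diff[OF dB2[rule_format, OF sI] DERIV_cmult[OF d1, of k]] unfolding I_def by simp
      qed
      show "\<forall>t\<in>{0..T0}. 0 \<le> B2 t - k * (a t)^2 \<longrightarrow> - 2 * \<beta> * n t * (B2 t + \<alpha> * p t * q t) - k * (2 * a t * (\<gamma> * n t * (a t + \<alpha> * u t * p t))) \<le> 2 * k * \<gamma> * R * (B2 t - k * (a t)^2)"
      proof (intro ballI impI)
        fix s assume s: "s \<in> {0..T0}" and g: "0 \<le> B2 s - k * (a s)^2"
        have sI: "s \<in> I" using s unfolding I_def .
        have ca: "- \<beta> * ((norm (b s))^2 + \<alpha> * ((u s * a s + q s) / N s) * q s) - (\<alpha>^2/4) * \<gamma> * (a s * (a s + \<alpha> * u s * ((u s * a s + q s) / N s)))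
             \<le> (\<alpha>^2/4) * \<gamma> * ((norm (b s))^2 - (\<alpha>^2/4) * (a s)^2)"
          by (rule cone_alg) (use ha Npos sI Nn CS g B2n k_def in auto)
        then have X: "- \<beta> * (B2 s + \<alpha> * p s * q s) - k * \<gamma> * (a s * (a s + \<alpha> * u s * p s)) \<le> k * \<gamma> * (B2 s - k * (a s)^2)"
          unfolding pq[symmetric] B2n[symmetric] k_def[symmetric] .
        have "- 2 * \<beta> * n s * (B2 s + \<alpha> * p s * q s) - k * (2 * a s * (\<gamma> * n s * (a s + \<alpha> * u s * p s)))
            = (2 * n s) * (- \<beta> * (B2 s + \<alpha> * p s * q s) - k * \<gamma> * (a s * (a s + \<alpha> * u s * p s)))"
          by (simp add: algebra_simps)
        also have "\<dots> \<le> (2 * n s) * (k * \<gamma> * (B2 s - k * (a s)^2))"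
          using X n0 by (intro mult_left_mono) auto
        also have "\<dots> \<le> (2 * R) * (k * \<gamma> * (B2 s - k * (a s)^2))"
          using nle sI g k01 ha by (intro mult_right_mono) auto
        finally show "- 2 * \<beta> * n s * (B2 s + \<alpha> * p s * q s) - k * (2 * a s * (\<gamma> * n s * (a s + \<alpha> * u s * p s))) \<le> 2 * k * \<gamma> * R * (B2 s - k * (a s)^2)"
          by (simp add: algebra_simps)
      qed
      show "B2 0 - k * (a 0)^2 \<le> 0"
      proof -
        have "tan (axis_angle (v 0)) = norm (b 0) / \<bar>a 0\<bar>"
          unfolding a_def b_def by (rule tan_axis_angle[OF v0])
        then have "norm (b 0) / \<bar>a 0\<bar> \<le> \<alpha> / 2" using cone0 by simp
        moreover have "\<bar>a 0\<bar> > 0" using v0 unfolding a_def by simp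
        ultimately have "norm (b 0) \<le> \<alpha> / 2 * \<bar>a 0\<bar>" by (simp add: divide_le_eq)
        then have "(norm (b 0))^2 \<le> (\<alpha> / 2 * \<bar>a 0\<bar>)^2" by (intro power_mono) auto
        then show ?thesis unfolding B2n k_def by (simp add: power_mult_distrib power_divide)
      qed
      show "t \<in> {0..T0}" using t unfolding I_def .
    qed
    then show "B2 t \<le> k * (a t)^2" by simp
  qed
  have Ble: "\<forall>t\<in>I. norm (b t) \<le> \<bar>a t\<bar>"
  proof
    fix t assume t: "t \<in> I"
    have "(norm (b t))^2 \<le> k * (a t)^2" using cone t B2n by simp
    also have "\<dots> \<le> 1 * (a t)^2" using k01 by (intro mult_right_mono) auto
    finally have "(norm (b t))^2 \<le> \<bar>a t\<bar>^2" by simp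
    then show "norm (b t) \<le> \<bar>a t\<bar>" by (rule power2_le_imp_le) simp
  qed
  have anz: "\<forall>t\<in>I. a t \<noteq> 0"
  proof
    fix t assume t: "t \<in> I"
    have "(\<lambda>s. (a s)^2) t > 0"
    proof (rule gronwall_pos[where g = "\<lambda>s. (a s)^2" and g' = "\<lambda>t. 2 * a t * (\<gamma> * n t * (a t + \<alpha> * u t * p t))" and K = "2 * \<gamma> * R" and T = T0])
      show "\<forall>t\<in>{0..T0}. ((\<lambda>s. (a s)^2) has_real_derivative 2 * a t * (\<gamma> * n t * (a t + \<alpha> * u t * p t))) (at t within {0..T0})"
      proof
        fix s assume s: "s \<in> {0..T0}"
        have sI: "s \<in> I" using s unfolding I_def .
        have "((\<lambda>s. (a s)^2) has_real_derivative 2 * a s * (\<gamma> * n s * (a s + \<alpha> * u s * p s))) (at s within I)"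
          using DERIV_power[OF da[rule_format, OF sI], of 2] by (rule DERIV_cong) simp
        then show "((\<lambda>s. (a s)^2) has_real_derivative 2 * a s * (\<gamma> * n s * (a s + \<alpha> * u s * p s))) (at s within {0..T0})"
          unfolding I_def .
      qed
      show "\<forall>t\<in>{0..T0}. - (2 * \<gamma> * R) * (a t)^2 \<le> 2 * a t * (\<gamma> * n t * (a t + \<alpha> * u t * p t))"
      proof
        fix s assume s: "s \<in> {0..T0}"
        have sI: "s \<in> I" using s unfolding I_def .
        have X: "- ((a s)^2) \<le> a s * (a s + \<alpha> * u s * ((u s * a s + q s) / N s))"
          by (rule asq_alg[of \<alpha> "N s" "u s" "norm (w s)" "norm (b s)" "q s" "a s"]) (use ha Npos sI Nn CS Ble in auto)
        have "- (2 * \<gamma> * R) * (a s)^2 \<le> - (2 * \<gamma> * n s) * (a s)^2"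
          using nle sI ha by (simp add: mult_right_mono)
        also have "\<dots> = (2 * \<gamma> * n s) * (- ((a s)^2))" by simp
        also have "\<dots> \<le> (2 * \<gamma> * n s) * (a s * (a s + \<alpha> * u s * p s))"
          using X ha n0 unfolding pq by (intro mult_left_mono) auto
        also have "\<dots> = 2 * a s * (\<gamma> * n s * (a s + \<alpha> * u s * p s))" by (simp add: algebra_simps)
        finally show "- (2 * \<gamma> * R) * (a s)^2 \<le> 2 * a s * (\<gamma> * n s * (a s + \<alpha> * u s * p s))" .
      qed
      show "(a 0)^2 > 0" using v0 unfolding a_def by simp
      show "t \<in> {0..T0}" using t unfolding I_def .
    qed
    then show "a t \<noteq> 0" by simp
  qed
  have W20: "W2 t \<ge> 0" for t unfolding W2_def by simp
  have wcase: "(\<forall>t\<in>I. w t = 0) \<or> (\<forall>t\<in>I. W2 t > 0)"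
  proof (cases "W2 0 = 0")
    case True
    have "w t = 0" if t: "t \<in> I" for t
    proof -
      have "(\<lambda>s. - W2 s) 0 \<le> (\<lambda>s. - W2 s) t"
      proof (rule deriv_mono_gen[where g = "\<lambda>s. - W2 s" and g' = "\<lambda>t. 2 * \<beta> * n t * W2 t" and T = T0])
        show "\<forall>t\<in>{0..T0}. ((\<lambda>s. - W2 s) has_real_derivative 2 * \<beta> * n t * W2 t) (at t within {0..T0})"
        proof
          fix s assume s: "s \<in> {0..T0}"
          have sI: "s \<in> I" using s unfolding I_def .
          show "((\<lambda>s. - W2 s) has_real_derivative 2 * \<beta> * n s * W2 s) (at s within {0..T0})"
            using DERIV_minus[OF dW2[rule_format, OF sI]] unfolding I_def by simp
        qed
        show "\<forall>t\<in>{0..T0}. 0 \<le> 2 * \<beta> * n t * W2 t" using ha n0 W20 by simp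
      qed (use t in \<open>simp_all add: I_def\<close>)
      then have "W2 t \<le> 0" using True by simp
      then have "W2 t = 0" using W20[of t] by simp
      then show "w t = 0" unfolding W2_def by simp
    qed
    then show ?thesis by blast
  next
    case False
    then have W0: "W2 0 > 0" using W20[of 0] by simp
    have "W2 t > 0" if t: "t \<in> I" for t
    proof (rule gronwall_pos[where g = W2 and g' = "\<lambda>t. - 2 * \<beta> * n t * W2 t" and K = "2 * \<beta> * R" and T = T0])
      show "\<forall>t\<in>{0..T0}. (W2 has_real_derivative - 2 * \<beta> * n t * W2 t) (at t within {0..T0})"
        using dW2 unfolding I_def .
      show "\<forall>t\<in>{0..T0}. - (2 * \<beta> * R) * W2 t \<le> - 2 * \<beta> * n t * W2 t"
      proof
        fix s assume s: "s \<in> {0..T0}"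
        have "n s \<le> R" using nle s unfolding I_def by auto
        then have "2 * \<beta> * n s * W2 s \<le> 2 * \<beta> * R * W2 s" using ha W20[of s] by (intro mult_right_mono) auto
        then show "- (2 * \<beta> * R) * W2 s \<le> - 2 * \<beta> * n s * W2 s" by simp
      qed
      show "W2 0 > 0" using W0 .
      show "t \<in> {0..T0}" using t unfolding I_def .
    qed
    then show ?thesis by blast
  qed
  obtain \<Theta> \<theta>' where d\<Theta>: "\<forall>t\<in>I. (\<Theta> has_real_derivative \<theta>' t) (at t within I)"
    and \<theta>b: "\<forall>t\<in>I. \<bar>\<Theta> t\<bar> \<le> 1"
    and \<theta>ge: "\<forall>t\<in>I. (\<beta> + \<gamma>) * n t * (\<bar>u t\<bar> * norm (w t) / N t) \<le> \<theta>' t"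
  proof -
    from wcase show thesis
    proof
      assume w0: "\<forall>t\<in>I. w t = 0"
      show thesis by (rule that[of "\<lambda>_. 1" "\<lambda>_. 0"]) (use w0 in auto)
    next
      assume Wp: "\<forall>t\<in>I. W2 t > 0"
      define P where "P = (\<lambda>t. \<bar>u t\<bar>)"
      define Q where "Q = (\<lambda>t. sqrt (W2 t))"
      define S where "S = (\<lambda>t. sqrt (N t))"
      have P2: "(P t)^2 = (u t)^2" for t unfolding P_def by simp
      have Q2: "(Q t)^2 = W2 t" for t unfolding Q_def using W20[of t] by simp
      have Qn: "Q t = norm (w t)" for t unfolding Q_def W2n by simp
      have S2: "(S t)^2 = N t" for t unfolding S_def using N0[of t] by simp
      have SPQ: "S t = sqrt ((P t)^2 + (Q t)^2)" for t unfolding S_def N_def P2 Q2 ..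
      have dP: "(P has_real_derivative \<gamma> * n t * P t) (at t within I)" if t: "t \<in> I" for t
      proof -
        have "((\<lambda>s. sqrt ((u s)^2)) has_real_derivative 2 * \<gamma> * n t * (u t)^2 / (2 * sqrt ((u t)^2))) (at t within I)"
          by (rule sqrt_chain[OF dU2[rule_format, OF t]]) (use unz t in simp)
        moreover have "(\<lambda>s. sqrt ((u s)^2)) = P" unfolding P_def by simp
        moreover have "2 * \<gamma> * n t * (u t)^2 / (2 * sqrt ((u t)^2)) = \<gamma> * n t * P t"
        proof -
          have pos: "\<bar>u t\<bar> > 0" using unz t by simp
          have "(u t)^2 / \<bar>u t\<bar> = \<bar>u t\<bar>^2 / \<bar>u t\<bar>" by simp
          also have "\<dots> = \<bar>u t\<bar>" using pos by (metis power2_eq_square nonzero_mult_div_cancel_left less_irrefl)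
          finally have e: "(u t)^2 / \<bar>u t\<bar> = \<bar>u t\<bar>" .
          have "2 * \<gamma> * n t * (u t)^2 / (2 * sqrt ((u t)^2)) = \<gamma> * n t * ((u t)^2 / \<bar>u t\<bar>)" by simp
          then show ?thesis unfolding P_def e .
        qed
        ultimately show ?thesis by simp
      qed
      have dQ: "(Q has_real_derivative - (\<beta> * n t * Q t)) (at t within I)" if t: "t \<in> I" for t
      proof -
        have "(Q has_real_derivative - 2 * \<beta> * n t * W2 t / (2 * sqrt (W2 t))) (at t within I)"
          unfolding Q_def by (rule sqrt_chain[OF dW2[rule_format, OF t]]) (use Wp t in simp)
        moreover have "- 2 * \<beta> * n t * W2 t / (2 * sqrt (W2 t)) = - (\<beta> * n t * Q t)"
        proof -
          have pos: "sqrt (W2 t) > 0" using Wp t by simp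
          have "W2 t / sqrt (W2 t) = (sqrt (W2 t) * sqrt (W2 t)) / sqrt (W2 t)" using W20[of t] by simp
          also have "\<dots> = sqrt (W2 t)" using pos by (metis nonzero_mult_div_cancel_left less_irrefl)
          finally have e: "W2 t / sqrt (W2 t) = sqrt (W2 t)" .
          have "- 2 * \<beta> * n t * W2 t / (2 * sqrt (W2 t)) = - (\<beta> * n t * (W2 t / sqrt (W2 t)))" by simp
          then show ?thesis unfolding Q_def e .
        qed
        ultimately show ?thesis by simp
      qed
      have dS: "(S has_real_derivative n t * (\<gamma> * (P t)^2 - \<beta> * (Q t)^2) / S t) (at t within I)" if t: "t \<in> I" for t
      proof -
        have dN: "(N has_real_derivative 2 * \<gamma> * n t * (u t)^2 + - 2 * \<beta> * n t * W2 t) (at t within I)"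
          unfolding N_def using DERIV_add[OF dU2[rule_format, OF t] dW2[rule_format, OF t]] by simp
        have "(S has_real_derivative (2 * \<gamma> * n t * (u t)^2 + - 2 * \<beta> * n t * W2 t) / (2 * sqrt (N t))) (at t within I)"
          unfolding S_def by (rule sqrt_chain[OF dN]) (use Npos t in simp)
        moreover have "(2 * \<gamma> * n t * (u t)^2 + - 2 * \<beta> * n t * W2 t) / (2 * sqrt (N t)) = n t * (\<gamma> * (P t)^2 - \<beta> * (Q t)^2) / S t"
          unfolding P2 Q2 S_def using Npos[rule_format, OF t] by (simp add: field_simps)
        ultimately show ?thesis by simp
      qed
      have Spos: "S t > 0" if "t \<in> I" for t unfolding S_def using Npos that by simp
      define \<theta>'' where "\<theta>'' = (\<lambda>t. ((\<gamma> * n t * P t + \<beta> * n t * Q t) * S t - (P t - Q t) * (n t * (\<gamma> * (P t)^2 - \<beta> * (Q t)^2) / S t)) / (S t)^2)"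
      show thesis
      proof (rule that[of "\<lambda>t. (P t - Q t) / S t" \<theta>''])
        show "\<forall>t\<in>I. ((\<lambda>t. (P t - Q t) / S t) has_real_derivative \<theta>'' t) (at t within I)"
        proof
          fix t assume t: "t \<in> I"
          show "((\<lambda>t. (P t - Q t) / S t) has_real_derivative \<theta>'' t) (at t within I)"
          proof -
            have Sne: "S t \<noteq> 0" using Spos[OF t] by simp
            show ?thesis
              using DERIV_divide[OF DERIV_diff[OF dP[OF t] dQ[OF t]] dS[OF t] Sne]
              unfolding \<theta>''_def by (rule DERIV_cong) (simp add: power2_eq_square)
          qed
        qed
        show "\<forall>t\<in>I. \<bar>(P t - Q t) / S t\<bar> \<le> 1"
        proof
          fix t assume t: "t \<in> I"
          have "P t \<le> S t" unfolding SPQ by (rule real_le_rsqrt) simp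
          moreover have "Q t \<le> S t" unfolding SPQ by (rule real_le_rsqrt) simp
          moreover have "P t \<ge> 0" "Q t \<ge> 0" unfolding P_def Q_def using W20[of t] by auto
          ultimately have "\<bar>P t - Q t\<bar> \<le> S t" by linarith
          then show "\<bar>(P t - Q t) / S t\<bar> \<le> 1" using Spos[OF t] by (simp add: abs_divide divide_le_eq)
        qed
        show "\<forall>t\<in>I. (\<beta> + \<gamma>) * n t * (\<bar>u t\<bar> * norm (w t) / N t) \<le> \<theta>'' t"
        proof
          fix t assume t: "t \<in> I"
          have "(\<beta> + \<gamma>) * n t * (P t * Q t / (S t)^2) \<le> \<theta>'' t"
            unfolding \<theta>''_def
            by (rule theta_alg) (use unz Wp t ha n0 SPQ in \<open>auto simp: P_def Q_def\<close>)
          then show "(\<beta> + \<gamma>) * n t * (\<bar>u t\<bar> * norm (w t) / N t) \<le> \<theta>'' t"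
            unfolding S2 Qn P_def .
        qed
      qed
    qed
  qed
  define C where "C = \<alpha> * (\<beta> + \<gamma> * k)"
  define cc where "cc = C / (\<beta> + \<gamma>)"
  have bg: "\<beta> + \<gamma> > 0" using ha by simp
  have C0: "C \<ge> 0" unfolding C_def using ha k01 by simp
  have cc0: "cc \<ge> 0" unfolding cc_def using C0 bg by simp
  have ccbg: "cc * (\<beta> + \<gamma>) = C" unfolding cc_def using bg by simp
  define \<epsilon> where "\<epsilon> = 1 / ((\<beta> + \<gamma>) * R * T0 + 1)"
  have den: "(\<beta> + \<gamma>) * R * T0 + 1 \<ge> 1" using bg R0 T0 by simp
  have eps: "\<epsilon> > 0" "\<epsilon> \<le> 1" unfolding \<epsilon>_def using den by auto
  have epsT: "(\<beta> + \<gamma>) * R * \<epsilon> * T0 \<le> 1"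
  proof -
    have "(\<beta> + \<gamma>) * R * \<epsilon> * T0 = ((\<beta> + \<gamma>) * R * T0) / ((\<beta> + \<gamma>) * R * T0 + 1)"
      unfolding \<epsilon>_def by simp
    also have "\<dots> \<le> 1" using den by (simp add: divide_le_eq)
    finally show ?thesis .
  qed
  define \<eta> where "\<eta> = (\<lambda>t. sqrt (B2 t / (a t)^2 + \<epsilon>^2))"
  define \<eta>' where "\<eta>' = (\<lambda>t. ((- (2 * \<beta> * n t * (B2 t + \<alpha> * p t * q t))) * (a t)^2 - B2 t * (2 * a t * (\<gamma> * n t * (a t + \<alpha> * u t * p t)))) / ((a t)^2)^2 / (2 * \<eta> t))"
  have d\<eta>: "\<forall>t\<in>I. (\<eta> has_real_derivative \<eta>' t) (at t within I)"
  proof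
    fix t assume t: "t \<in> I"
    have d1: "((\<lambda>s. (a s)^2) has_real_derivative 2 * a t * (\<gamma> * n t * (a t + \<alpha> * u t * p t))) (at t within I)"
      using DERIV_power[OF da[rule_format, OF t], of 2] by (rule DERIV_cong) simp
    have ane: "(a t)^2 \<noteq> 0" using anz t by simp
    have dPsi: "((\<lambda>s. B2 s / (a s)^2) has_real_derivative ((- 2 * \<beta> * n t * (B2 t + \<alpha> * p t * q t)) * (a t)^2 - B2 t * (2 * a t * (\<gamma> * n t * (a t + \<alpha> * u t * p t)))) / ((a t)^2 * (a t)^2)) (at t within I)"
      by (rule DERIV_divide[OF dB2[rule_format, OF t] d1 ane])
    have pos: "B2 t / (a t)^2 + \<epsilon>^2 > 0" using eps B2_def by (simp add: add_nonneg_pos)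
    have "((\<lambda>s. sqrt (B2 s / (a s)^2 + \<epsilon>^2)) has_real_derivative (((- 2 * \<beta> * n t * (B2 t + \<alpha> * p t * q t)) * (a t)^2 - B2 t * (2 * a t * (\<gamma> * n t * (a t + \<alpha> * u t * p t)))) / ((a t)^2 * (a t)^2) + 0) / (2 * sqrt (B2 t / (a t)^2 + \<epsilon>^2))) (at t within I)"
      by (rule sqrt_chain[OF DERIV_add[OF dPsi DERIV_const] pos])
    then show "(\<eta> has_real_derivative \<eta>' t) (at t within I)"
      unfolding \<eta>_def \<eta>'_def by (rule DERIV_cong) (simp add: power2_eq_square)
  qed
  have \<eta>le: "\<forall>t\<in>I. \<eta>' t \<le> n t * (- (\<beta> + \<gamma>) * \<eta> t + (\<beta> + \<gamma>) * \<epsilon> + C * (\<bar>u t\<bar> * norm (w t) / N t))"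
  proof
    fix t assume t: "t \<in> I"
    have "((- (2 * \<beta> * n t * ((norm (b t))^2 + \<alpha> * ((u t * a t + q t) / N t) * q t))) * (a t)^2 - (norm (b t))^2 * (2 * a t * (\<gamma> * n t * (a t + \<alpha> * u t * ((u t * a t + q t) / N t))))) / ((a t)^2)^2 / (2 * sqrt ((norm (b t))^2 / (a t)^2 + \<epsilon>^2))
     \<le> n t * (- (\<beta> + \<gamma>) * sqrt ((norm (b t))^2 / (a t)^2 + \<epsilon>^2) + (\<beta> + \<gamma>) * \<epsilon> + \<alpha> * (\<beta> + \<gamma> * (\<alpha>^2/4)) * (\<bar>u t\<bar> * norm (w t) / N t))"
      by (rule eta_alg) (use ha n0 Npos t Nn CS anz cone B2n k_def eps in auto)
    then show "\<eta>' t \<le> n t * (- (\<beta> + \<gamma>) * \<eta> t + (\<beta> + \<gamma>) * \<epsilon> + C * (\<bar>u t\<bar> * norm (w t) / N t))"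
      unfolding \<eta>'_def \<eta>_def C_def k_def pq[symmetric] B2n[symmetric] .
  qed
  define \<tau> where "\<tau> = (\<lambda>t. norm (b t) / \<bar>a t\<bar>)"
  have \<tau>0: "\<tau> t \<ge> 0" for t unfolding \<tau>_def by simp
  have \<tau>\<eta>: "\<tau> t \<le> \<eta> t" for t
  proof -
    have "(\<tau> t)^2 = B2 t / (a t)^2" unfolding \<tau>_def B2n by (simp add: power_divide)
    then have "\<tau> t = sqrt (B2 t / (a t)^2)" using \<tau>0[of t] by (metis real_sqrt_unique)
    also have "\<dots> \<le> \<eta> t" unfolding \<eta>_def by (rule real_sqrt_le_mono) simp
    finally show ?thesis .
  qed
  have \<eta>0: "\<eta> t \<ge> 0" for t unfolding \<eta>_def B2_def by simp
  have \<eta>b: "\<forall>t\<in>I. \<eta> t \<le> sqrt (k + 1)"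
  proof
    fix t assume t: "t \<in> I"
    have "B2 t / (a t)^2 \<le> k" using cone t anz by (simp add: divide_le_eq)
    moreover have "\<epsilon>^2 \<le> 1" using eps by (simp add: power_le_one)
    ultimately show "\<eta> t \<le> sqrt (k + 1)" unfolding \<eta>_def by (intro real_sqrt_le_mono) simp
  qed
  define F where "F = (\<lambda>t. \<eta> t - cc * \<Theta> t)"
  define F' where "F' = (\<lambda>t. \<eta>' t - cc * \<theta>' t)"
  have dF: "\<forall>t\<in>I. (F has_real_derivative F' t) (at t within I)"
    unfolding F_def F'_def using d\<eta> d\<Theta> by (auto intro!: DERIV_diff DERIV_cmult)
  have pw: "\<forall>t\<in>I. (\<beta> + \<gamma>) * (n t * \<tau> t) \<le> - F' t + (\<beta> + \<gamma>) * R * \<epsilon>"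
  proof
    fix t assume t: "t \<in> I"
    define m where "m = \<bar>u t\<bar> * norm (w t) / N t"
    have e1: "\<eta>' t \<le> n t * (- (\<beta> + \<gamma>) * \<eta> t + (\<beta> + \<gamma>) * \<epsilon> + C * m)" using \<eta>le t unfolding m_def by blast
    have e2: "cc * ((\<beta> + \<gamma>) * n t * m) \<le> cc * \<theta>' t" using \<theta>ge t cc0 unfolding m_def by (intro mult_left_mono) auto
    have e3: "cc * ((\<beta> + \<gamma>) * n t * m) = C * n t * m" unfolding ccbg[symmetric] by (simp add: algebra_simps)
    have e4: "(\<beta> + \<gamma>) * (n t * \<tau> t) \<le> (\<beta> + \<gamma>) * (n t * \<eta> t)"
      using \<tau>\<eta>[of t] n0[of t] bg by (intro mult_left_mono) auto
    have e5: "(\<beta> + \<gamma>) * (n t * \<epsilon>) \<le> (\<beta> + \<gamma>) * (R * \<epsilon>)"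
      using nle t eps bg by (intro mult_left_mono mult_right_mono) auto
    have "- F' t = - \<eta>' t + cc * \<theta>' t" unfolding F'_def by simp
    moreover have "n t * (- (\<beta> + \<gamma>) * \<eta> t + (\<beta> + \<gamma>) * \<epsilon> + C * m) = - ((\<beta> + \<gamma>) * (n t * \<eta> t)) + (\<beta> + \<gamma>) * (n t * \<epsilon>) + C * n t * m"
      by (simp add: algebra_simps)
    ultimately show "(\<beta> + \<gamma>) * (n t * \<tau> t) \<le> - F' t + (\<beta> + \<gamma>) * R * \<epsilon>"
      using e1 e2 e3 e4 e5 by (simp add: algebra_simps)
  qed
  have t1I: "t1 \<in> I" and t2I: "t2 \<in> I" using t1 t2 unfolding I_def by auto
  have sub: "{t1..t2} \<subseteq> I" using t1 t2 unfolding I_def by auto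
  have eqI: "\<forall>t\<in>{t1..t2}. norm (x t) powr \<alpha> * tan (axis_angle (v t)) = n t * \<tau> t"
  proof
    fix t assume "t \<in> {t1..t2}"
    then have t: "t \<in> I" using sub by auto
    have "tan (axis_angle (v t)) = norm (snd (v t)) / \<bar>fst (v t)\<bar>"
      by (rule tan_axis_angle) (use anz t in \<open>simp add: a_def\<close>)
    then show "norm (x t) powr \<alpha> * tan (axis_angle (v t)) = n t * \<tau> t"
      unfolding n_def \<tau>_def a_def b_def by simp
  qed
  have contx: "continuous_on I x"
    using dx unfolding I_def
    by (meson continuous_on_eq_continuous_within has_vector_derivative_continuous)
  have contv: "continuous_on I v"
    using dvx by (meson continuous_on_eq_continuous_within has_vector_derivative_continuous)
  have cont: "continuous_on {t1..t2} (\<lambda>t. n t * \<tau> t)"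
  proof -
    have cx: "continuous_on {t1..t2} x" using contx sub by (rule continuous_on_subset)
    have cv: "continuous_on {t1..t2} v" using contv sub by (rule continuous_on_subset)
    have nz1: "\<forall>t\<in>{t1..t2}. norm (x t) \<noteq> 0" using xnz sub by auto
    have nz2: "\<forall>t\<in>{t1..t2}. \<bar>fst (v t)\<bar> \<noteq> 0" using anz sub unfolding a_def by auto
    show ?thesis unfolding n_def \<tau>_def a_def b_def
      by (intro continuous_intros cx cv nz1 nz2)
  qed
  have int: "(\<lambda>t. n t * \<tau> t) integrable_on {t1..t2}"
    by (rule integrable_continuous_interval[OF cont])
  have int': "(\<lambda>t. norm (x t) powr \<alpha> * tan (axis_angle (v t))) integrable_on {t1..t2}"
    by (rule integrable_eq[OF int]) (use eqI in auto)
  have inteq: "integral {t1..t2} (\<lambda>t. norm (x t) powr \<alpha> * tan (axis_angle (v t))) = integral {t1..t2} (\<lambda>t. n t * \<tau> t)"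
    using eqI by (intro integral_cong) auto
  have Qpos: "Qc \<alpha> \<gamma> \<beta> \<ge> 0" unfolding Qc_def using ha bg by (intro divide_nonneg_pos add_nonneg_nonneg) auto
  have "integral {t1..t2} (\<lambda>t. n t * \<tau> t) \<le> Qc \<alpha> \<gamma> \<beta>"
  proof (cases "t1 \<le> t2")
    case False
    then show ?thesis using Qpos by simp
  next
    case True
    have ftc: "(F' has_integral F t2 - F t1) {t1..t2}"
    proof (rule fundamental_theorem_of_calculus[OF True])
      fix t assume t: "t \<in> {t1..t2}"
      then have tI: "t \<in> I" using sub by auto
      have "(F has_real_derivative F' t) (at t within {t1..t2})"
        using DERIV_subset[OF dF[rule_format, OF tI] sub] .
      then show "(F has_vector_derivative F' t) (at t within {t1..t2})"
        by (simp add: has_real_derivative_iff_has_vector_derivative)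
    qed
    have h2: "((\<lambda>t. - F' t + (\<beta> + \<gamma>) * R * \<epsilon>) has_integral (- (F t2 - F t1) + Henstock_Kurzweil_Integration.content {t1..t2} *\<^sub>R ((\<beta> + \<gamma>) * R * \<epsilon>))) {t1..t2}"
      by (rule has_integral_add[OF has_integral_neg[OF ftc] has_integral_const_real])
    have h1: "((\<lambda>t. (\<beta> + \<gamma>) * (n t * \<tau> t)) has_integral ((\<beta> + \<gamma>) * integral {t1..t2} (\<lambda>t. n t * \<tau> t))) {t1..t2}"
      by (rule has_integral_mult_right[OF integrable_integral[OF int]])
    have le: "(\<beta> + \<gamma>) * integral {t1..t2} (\<lambda>t. n t * \<tau> t) \<le> - (F t2 - F t1) + Henstock_Kurzweil_Integration.content {t1..t2} *\<^sub>R ((\<beta> + \<gamma>) * R * \<epsilon>)"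
      by (rule has_integral_le[OF h1 h2]) (use pw sub in auto)
    have c1: "Henstock_Kurzweil_Integration.content {t1..t2} *\<^sub>R ((\<beta> + \<gamma>) * R * \<epsilon>) \<le> 1"
    proof -
      have "Henstock_Kurzweil_Integration.content {t1..t2} *\<^sub>R ((\<beta> + \<gamma>) * R * \<epsilon>) = (t2 - t1) * ((\<beta> + \<gamma>) * R * \<epsilon>)" using True by simp
      also have "\<dots> \<le> T0 * ((\<beta> + \<gamma>) * R * \<epsilon>)"
        using t1 t2 bg R0 eps by (intro mult_right_mono) auto
      also have "\<dots> \<le> 1" using epsT by (simp add: algebra_simps)
      finally show ?thesis .
    qed
    have c2: "F t1 - F t2 \<le> sqrt (k + 1) + 2 * cc"
    proof -
      have "\<eta> t1 \<le> sqrt (k + 1)" using \<eta>b t1I by blast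
      moreover have "\<eta> t2 \<ge> 0" by (rule \<eta>0)
      moreover have "- cc * \<Theta> t1 \<le> cc"
      proof -
        have "- \<Theta> t1 \<le> 1" using \<theta>b t1I by (auto simp: abs_le_iff)
        then have "cc * (- \<Theta> t1) \<le> cc * 1" using cc0 by (rule mult_left_mono)
        then show ?thesis by simp
      qed
      moreover have "cc * \<Theta> t2 \<le> cc"
      proof -
        have "\<Theta> t2 \<le> 1" using \<theta>b t2I by (auto simp: abs_le_iff)
        then have "cc * \<Theta> t2 \<le> cc * 1" using cc0 by (rule mult_left_mono)
        then show ?thesis by simp
      qed
      ultimately show ?thesis unfolding F_def by linarith
    qed
    have "(\<beta> + \<gamma>) * integral {t1..t2} (\<lambda>t. n t * \<tau> t) \<le> sqrt (k + 1) + 2 * cc + 1"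
      using le c1 c2 by linarith
    then show ?thesis unfolding Qc_def k_def[symmetric] cc_def[symmetric] C_def[symmetric] using bg
      by (simp add: pos_le_divide_eq mult.commute)
  qed
  then show ?thesis using int' inteq by simp
qed


theorem corollary7p9:
  fixes \<alpha> \<gamma> \<beta> r0 :: real
  assumes "0 < \<alpha>" "\<alpha> < 1" "0 < \<gamma>" "0 < \<beta>" "0 < r0"
  shows "\<exists>Q0::real. \<forall>(x :: real \<Rightarrow> real \<times> (real^'n)) (v :: real \<Rightarrow> real \<times> (real^'n)) T0 t1 t2.
    (0 < T0 \<and>
     (\<forall>t\<in>{0..T0}. (x has_vector_derivative VF \<alpha> \<gamma> \<beta> (x t)) (at t within {0..T0})) \<and>
     norm (x 0) = r0 \<and> norm (x T0) = r0 \<and> (\<forall>t\<in>{0<..<T0}. norm (x t) < r0) \<and>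
     (\<forall>t\<in>{0..T0}. \<exists>L. (VF \<alpha> \<gamma> \<beta> has_derivative L) (at (x t)) \<and>
                        (v has_vector_derivative L (v t)) (at t within {0..T0})) \<and>
     v 0 \<noteq> 0 \<and> fst (v 0) \<noteq> 0 \<and> tan (axis_angle (v 0)) \<le> \<alpha> / 2 \<and>
     t1 \<in> {0..T0} \<and> t2 \<in> {0..T0})
    \<longrightarrow> ((\<lambda>t. norm (x t) powr \<alpha> * tan (axis_angle (v t))) integrable_on {t1..t2} \<and>
         integral {t1..t2} (\<lambda>t. norm (x t) powr \<alpha> * tan (axis_angle (v t))) \<le> Q0)"
  proof -
  show ?thesis
  proof (intro exI[of _ "Qc \<alpha> \<gamma> \<beta>"] allI impI)
    fix x :: "real \<Rightarrow> real \<times> (real^'n)" and v :: "real \<Rightarrow> real \<times> (real^'n)" and T0 t1 t2 :: real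
    assume h: "0 < T0 \<and>
     (\<forall>t\<in>{0..T0}. (x has_vector_derivative VF \<alpha> \<gamma> \<beta> (x t)) (at t within {0..T0})) \<and>
     norm (x 0) = r0 \<and> norm (x T0) = r0 \<and> (\<forall>t\<in>{0<..<T0}. norm (x t) < r0) \<and>
     (\<forall>t\<in>{0..T0}. \<exists>L. (VF \<alpha> \<gamma> \<beta> has_derivative L) (at (x t)) \<and>
                        (v has_vector_derivative L (v t)) (at t within {0..T0})) \<and>
     v 0 \<noteq> 0 \<and> fst (v 0) \<noteq> 0 \<and> tan (axis_angle (v 0)) \<le> \<alpha> / 2 \<and>
     t1 \<in> {0..T0} \<and> t2 \<in> {0..T0}"
    show "(\<lambda>t. norm (x t) powr \<alpha> * tan (axis_angle (v t))) integrable_on {t1..t2} \<and>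
         integral {t1..t2} (\<lambda>t. norm (x t) powr \<alpha> * tan (axis_angle (v t))) \<le> Qc \<alpha> \<gamma> \<beta>"
      using h by (intro main[OF assms]) auto
  qed
qed

end
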